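(* Let $N\ge2$, $\alpha,\beta>-1$, let $x_0<\dots<x_N$ be the JGL nodes with Lagrange basis $h_0,\dots,h_N$, and let $\mu\in(k-1,k)$ with $k\in\{1,2\}$. Suppose $Q_j^\mu\in\mathcal P_N$ satisfy: if $k=1$, for $1\le j\le N$, ${}^C D_-^\mu Q_j^\mu(x_i)=\delta_{ij}$ for $1\le i\le N$ and $Q_j^\mu(-1)=0$; if $k=2$, for $1\le j\le N-1$, ${}^C D_-^\mu Q_j^\mu(x_i)=\delta_{ij}$ for $1\le i\le N-1$ and $Q_j^\mu(\pm1)=0$. Let $\mathbf Q^{(\mu)}$ be the matrix with entries $\mathbf Q^{(\mu)}_{lj}=Q_j^\mu(x_l)$, $1\le l,j\le N+1-k$, and let ${}^C\mathbf D^{(\mu)}_{\rm in}$ be the matrix with entries $({}^C D_-^\mu h_j)(x_i)$, $1\le i,j\le N+1-k$. Then $$ \mathbf Q^{(\mu)}\,{}^C\mathbf D^{(\mu)}_{\rm in}={}^C\mathbf D^{(\mu)}_{\rm in}\,\mathbf Q^{(\mu)}=\mathbf I_{N+1-k}. $$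
   Context: For $\rho>0$, $(I_-^\rho u)(x)=\frac{1}{\Gamma(\rho)}\int_{-1}^x (x-y)^{\rho-1}u(y)\,dy$, $D^k=d^k/dx^k$, and for $\mu\in(k-1,k)$ the Caputo derivative is ${}^C D_-^\mu u=I_-^{k-\mu}(D^k u)$. The JGL nodes $x_0<\dots<x_N$ are the zeros of $(1-x^2)\frac{d}{dx}P_N^{(\alpha,\beta)}(x)$ (Jacobi polynomial, Szegő normalization), so $x_0=-1$, $x_N=1$; $h_j\in\mathcal P_N$ is the Lagrange basis polynomial with $h_j(x_i)=\delta_{ij}$. $\mathbf I_m$ is the $m\times m$ identity matrix. *)

theory Defs
  imports "HOL-Analysis.Analysis" "HOL-Computational_Algebra.Polynomial"
begin

(* Jacobi polynomial P_n^{(a,b)} in Szego normalization: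
   P_n^{(a,b)}(x) = sum_{s=0}^n C(n+a, n-s) C(n+b, s) ((x-1)/2)^s ((x+1)/2)^(n-s) *)
definition jacobi_poly :: "real \<Rightarrow> real \<Rightarrow> nat \<Rightarrow> real poly" where
  "jacobi_poly a b n =
     (\<Sum>s\<le>n. smult ((real n + a gchoose (n - s)) * (real n + b gchoose s))
                 ([:-1/2, 1/2:] ^ s * [:1/2, 1/2:] ^ (n - s)))"

(* (1 - x^2) * d/dx P_N^{(a,b)}(x); its zeros are the JGL nodes *)
definition jgl_poly :: "real \<Rightarrow> real \<Rightarrow> nat \<Rightarrow> real poly" where
  "jgl_poly a b N = [:1, 0, -1:] * pderiv (jacobi_poly a b N)"

definition lagrange_basis :: "(nat \<Rightarrow> real) \<Rightarrow> nat \<Rightarrow> nat \<Rightarrow> real poly" where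
  "lagrange_basis x N j =
     (\<Prod>i\<in>{..N} - {j}. smult (1 / (x j - x i)) [:- x i, 1:])"

definition RL_int :: "real \<Rightarrow> (real \<Rightarrow> real) \<Rightarrow> real \<Rightarrow> real" where
  "RL_int \<rho> u x = (1 / Gamma \<rho>) * integral {-1..x} (\<lambda>y. (x - y) powr (\<rho> - 1) * u y)"

definition caputo :: "real \<Rightarrow> real poly \<Rightarrow> real \<Rightarrow> real" where
  "caputo \<mu> u x = (let k = nat \<lceil>\<mu>\<rceil> in RL_int (real k - \<mu>) (poly ((pderiv ^^ k) u)) x)"

end

theory Submission
  imports Defs "Jordan_Normal_Form.Determinant"
begin

lemma kernel_int:
  fixes x \<rho> :: real and f :: "real \<Rightarrow> real"
  assumes rho: "\<rho> > 0" and f: "continuous_on {-1..x} f"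
  shows "(\<lambda>y. (x - y) powr (\<rho> - 1) * f y) integrable_on {-1..x}"
proof (cases "x \<ge> -1")
  case False
  then have "{-1..x} = {}" by auto
  then show ?thesis by (metis integrable_on_empty)
next
  case True
  have "(\<lambda>t. t powr (\<rho> - 1)) integrable_on {0..x+1}"
    by (rule integrable_on_powr_from_0) (use rho True in auto)
  hence "(\<lambda>t. t powr (\<rho> - 1)) integrable_on cbox 0 (x+1)" by simp
  from integrable_affinity[OF this, of "-1" x]
  have "(\<lambda>y. (-1 * y + x) powr (\<rho> - 1)) integrable_on (\<lambda>y. -1 * y + x) ` {0..x+1}"
    by simp
  moreover have "(\<lambda>y. -1 * y + x) ` {0..x+1} = {-1..x}"
  proof -
    have "(\<lambda>y. -1 * y + x) ` {0..x+1} = (\<lambda>y. x - y) ` {0..x+1}" by simp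
    also have "\<dots> = {-1..x}"
      by (auto simp: image_iff intro!: bexI[where x="x - _"])
    finally show ?thesis .
  qed
  ultimately have "(\<lambda>y. (x - y) powr (\<rho> - 1)) integrable_on {-1..x}" by simp
  hence abs: "(\<lambda>y. (x - y) powr (\<rho> - 1)) absolutely_integrable_on {-1..x}"
    by (subst absolutely_integrable_on_iff_nonneg) auto
  have meas: "f \<in> borel_measurable (lebesgue_on {-1..x})"
    by (rule continuous_imp_measurable_on_sets_lebesgue[OF f]) auto
  have bnd: "bounded (f ` {-1..x})"
    by (rule compact_imp_bounded, rule compact_continuous_image[OF f]) auto
  have "(\<lambda>y. f y * (x - y) powr (\<rho> - 1)) absolutely_integrable_on {-1..x}"
    by (rule absolutely_integrable_bounded_measurable_product_real[OF meas _ bnd abs]) auto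
  hence "(\<lambda>y. f y * (x - y) powr (\<rho> - 1)) integrable_on {-1..x}"
    using set_lebesgue_integral_eq_integral(1) by blast
  then show ?thesis by (simp add: mult.commute)
qed

lemma funpow_pderiv_add: "(pderiv ^^ k) (p + q) = (pderiv ^^ k) p + (pderiv ^^ k) q"
  by (induction k) (auto simp: pderiv_add)

lemma funpow_pderiv_smult: "(pderiv ^^ k) (Polynomial.smult c p) = Polynomial.smult c ((pderiv ^^ k) p)"
  by (induction k) (auto simp: pderiv_smult)

lemma funpow_pderiv_0: "(pderiv ^^ k) 0 = 0"
  by (induction k) auto

lemma funpow_pderiv_sum:
  "(pderiv ^^ k) (\<Sum>m\<in>A. Polynomial.smult (c m) (p m)) = (\<Sum>m\<in>A. Polynomial.smult (c m) ((pderiv ^^ k) (p m)))"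
  by (induction A rule: infinite_finite_induct)
     (auto simp: funpow_pderiv_add funpow_pderiv_smult funpow_pderiv_0)

lemma caputo_sum:
  assumes mu: "\<mu> > 0" and fin: "finite A"
    and nint: "\<mu> \<notin> \<int>"
  shows "caputo \<mu> (\<Sum>m\<in>A. Polynomial.smult (c m) (p m)) t = (\<Sum>m\<in>A. c m * caputo \<mu> (p m) t)"
proof -
  define k where "k = nat \<lceil>\<mu>\<rceil>"
  have rho: "real k - \<mu> > 0"
  proof -
    have "real k = of_int \<lceil>\<mu>\<rceil>" using mu by (simp add: k_def)
    moreover have "of_int \<lceil>\<mu>\<rceil> \<noteq> \<mu>" using nint by (metis Ints_of_int)
    moreover have "\<mu> \<le> of_int \<lceil>\<mu>\<rceil>" by simp
    ultimately show ?thesis by linarith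
  qed
  have int: "(\<lambda>y. (t - y) powr (real k - \<mu> - 1) * poly ((pderiv ^^ k) (p m)) y) integrable_on {-1..t}" for m
    by (rule kernel_int[OF rho]) (auto intro: continuous_intros)
  have "caputo \<mu> (\<Sum>m\<in>A. Polynomial.smult (c m) (p m)) t =
     1 / Gamma (real k - \<mu>) * integral {-1..t}
        (\<lambda>y. \<Sum>m\<in>A. c m * ((t - y) powr (real k - \<mu> - 1) * poly ((pderiv ^^ k) (p m)) y))"
    unfolding caputo_def RL_int_def Let_def k_def[symmetric] funpow_pderiv_sum
    by (simp add: poly_sum sum_distrib_left mult_ac)
  also have "\<dots> = 1 / Gamma (real k - \<mu>) * (\<Sum>m\<in>A. c m * integral {-1..t}
        (\<lambda>y. (t - y) powr (real k - \<mu> - 1) * poly ((pderiv ^^ k) (p m)) y))"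
    using int fin by (subst integral_sum) (auto simp: integral_mult_right intro: integrable_on_mult_right)
  also have "\<dots> = (\<Sum>m\<in>A. c m * caputo \<mu> (p m) t)"
    unfolding caputo_def RL_int_def Let_def k_def[symmetric]
    by (simp add: sum_distrib_left mult_ac)
  finally show ?thesis .
qed

lemma lagrange_at:
  assumes inj: "inj_on x {..N}" and i: "i \<le> N" and j: "j \<le> N"
  shows "poly (lagrange_basis x N j) (x i) = (if i = j then 1 else 0)"
proof (cases "i = j")
  case True
  have "poly (lagrange_basis x N j) (x i) = (\<Prod>l\<in>{..N} - {j}. poly (Polynomial.smult (1 / (x j - x l)) [:- x l, 1:]) (x j))"
    unfolding lagrange_basis_def True by (rule poly_prod)
  also have "\<dots> = (\<Prod>l\<in>{..N} - {j}. 1)"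
  proof (rule prod.cong)
    fix l assume "l \<in> {..N} - {j}"
    then have "x j \<noteq> x l" using inj j by (auto dest: inj_onD)
    then have "x j - x l \<noteq> 0" by simp
    then show "poly (Polynomial.smult (1 / (x j - x l)) [:- x l, 1:]) (x j) = 1" by (simp add: diff_divide_distrib[symmetric])
  qed simp
  finally show ?thesis using True by simp
next
  case False
  have "poly (lagrange_basis x N j) (x i) = (\<Prod>l\<in>{..N} - {j}. poly (Polynomial.smult (1 / (x j - x l)) [:- x l, 1:]) (x i))"
    unfolding lagrange_basis_def by (rule poly_prod)
  also have "\<dots> = 0"
    by (rule prod_zero) (use False i in auto)
  finally show ?thesis using False by simp
qed

lemma lagrange_degree: assumes jN: "j \<le> N" shows "degree (lagrange_basis x N j) \<le> N"
proof -
  have "degree (lagrange_basis x N j) \<le> (\<Sum>l\<in>{..N} - {j}. degree (Polynomial.smult (1 / (x j - x l)) [:- x l, 1:]))"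
    unfolding lagrange_basis_def using degree_prod_sum_le[of "{..N} - {j}" "\<lambda>l. Polynomial.smult (1 / (x j - x l)) [:- x l, 1:]"] by (simp add: o_def)
  also have "\<dots> \<le> (\<Sum>l\<in>{..N} - {j}. 1)"
    by (rule sum_mono) (simp add: degree_smult_le order_trans[OF degree_smult_le])
  also have "\<dots> \<le> N" using jN by (auto simp: card_Diff_singleton)
  finally show ?thesis .
qed

lemma interp:
  assumes inj: "inj_on x {..N}" and deg: "degree p \<le> N"
  shows "p = (\<Sum>m\<in>{..N}. Polynomial.smult (poly p (x m)) (lagrange_basis x N m))"
proof (rule ccontr)
  define q where "q = p - (\<Sum>m\<in>{..N}. Polynomial.smult (poly p (x m)) (lagrange_basis x N m))"
  assume "\<not> ?thesis"
  then have q0: "q \<noteq> 0" by (simp add: q_def)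
  have dq: "degree q \<le> N"
    unfolding q_def
    by (rule order_trans[OF degree_diff_le_max]) 
       (auto intro!: degree_sum_le order_trans[OF degree_smult_le] lagrange_degree deg)
  have roots: "poly q (x i) = 0" if "i \<le> N" for i
  proof -
    have "(\<Sum>m\<in>{..N}. poly p (x m) * poly (lagrange_basis x N m) (x i)) = 
          (\<Sum>m\<in>{..N}. if m = i then poly p (x i) else 0)"
      by (rule sum.cong) (use lagrange_at[OF inj that] in auto)
    also have "\<dots> = poly p (x i)" using that by simp
    finally show ?thesis by (simp add: q_def poly_sum)
  qed
  have "x ` {..N} \<subseteq> {t. poly q t = 0}" using roots by auto
  hence "card (x ` {..N}) \<le> card {t. poly q t = 0}"
    by (rule card_mono[OF poly_roots_finite[OF q0]])
  also have "\<dots> \<le> degree q" by (rule card_poly_roots_bound[OF q0])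
  finally have "Suc N \<le> N" using dq card_image[OF inj] by simp
  then show False by simp
qed

lemma gchoose_pos:
  fixes r :: real
  assumes "\<And>i. i < k \<Longrightarrow> real i < r"
  shows "r gchoose k > 0"
  unfolding gbinomial_altdef_of_nat
  by (rule prod_pos) (use assms in \<open>auto intro!: divide_pos_pos\<close>)

lemma jacobi_coeff_pos:
  assumes a: "a > -1" and b: "b > -1" and s: "s \<le> N"
  shows "(real N + a gchoose (N - s)) * (real N + b gchoose s) > 0"
proof -
  have "(real N + a gchoose (N - s)) > 0"
    by (rule gchoose_pos) (use a s in auto)
  moreover have "(real N + b gchoose s) > 0"
    by (rule gchoose_pos) (use b s in auto)
  ultimately show ?thesis by simp
qed

lemma pderiv_sum': "pderiv (\<Sum>s\<in>A. f s) = (\<Sum>s\<in>A. pderiv (f s))"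
  by (induction A rule: infinite_finite_induct) (auto simp: pderiv_add)

lemma term_deriv:
  fixes t :: real
  shows "poly (pderiv ([:-1/2, 1/2:] ^ s * [:1/2, 1/2:] ^ r)) t =
    (of_nat s * (((t - 1) / 2) ^ (s - 1) * ((t + 1) / 2) ^ r) +
     of_nat r * (((t - 1) / 2) ^ s * ((t + 1) / 2) ^ (r - 1))) / 2"
proof -
  have u: "poly [:-1/2, 1/2:] t = (t - 1) / 2" by (simp add: field_simps)
  have v: "poly [:1/2, 1/2:] t = (t + 1) / 2" by (simp add: field_simps)
  show ?thesis
    by (simp add: pderiv_mult pderiv_power pderiv_pCons u v field_simps)
qed

lemma jacobi_deriv:
  fixes t :: real
  shows "poly (pderiv (jacobi_poly a b N)) t =
    (\<Sum>s\<le>N. (real N + a gchoose (N - s)) * (real N + b gchoose s) *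
       ((of_nat s * (((t - 1) / 2) ^ (s - 1) * ((t + 1) / 2) ^ (N - s)) +
        of_nat (N - s) * (((t - 1) / 2) ^ s * ((t + 1) / 2) ^ (N - s - 1))) / 2))"
  unfolding jacobi_poly_def pderiv_sum' poly_sum
  by (simp only: pderiv_smult poly_smult term_deriv)

lemma sign_pow:
  fixes \<sigma> U V :: real
  assumes "\<sigma> * \<sigma> = 1"
  shows "\<sigma> ^ (a + b) * ((\<sigma> * U) ^ a * (\<sigma> * V) ^ b) = U ^ a * V ^ b"
proof -
  have "\<sigma> ^ (a + b) * \<sigma> ^ (a + b) = 1"
    by (metis assms power_mult_distrib power_one)
  then have "\<sigma> ^ (a + b) * (\<sigma> ^ a * \<sigma> ^ b) = 1" by (simp add: power_add)
  then show ?thesis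
    by (simp add: power_mult_distrib)
qed

lemma jacobi_deriv_nonzero:
  fixes t a b :: real
  assumes a: "a > -1" and b: "b > -1" and N: "N \<ge> 1" and t: "t > 1 \<or> t < -1"
  shows "poly (pderiv (jacobi_poly a b N)) t \<noteq> 0"
proof -
  define \<sigma> :: real where "\<sigma> = (if t > 1 then 1 else -1)"
  have ss: "\<sigma> * \<sigma> = 1" by (simp add: \<sigma>_def)
  define U where "U = \<sigma> * ((t - 1) / 2)"
  define V where "V = \<sigma> * ((t + 1) / 2)"
  have U0: "U > 0" and V0: "V > 0" using t by (auto simp: U_def V_def \<sigma>_def)
  have u: "(t - 1) / 2 = \<sigma> * U" using ss by (simp add: U_def mult.assoc[symmetric])
  have v: "(t + 1) / 2 = \<sigma> * V" using ss by (simp add: V_def mult.assoc[symmetric])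
  define c where "c s = (real N + a gchoose (N - s)) * (real N + b gchoose s)" for s
  define g where "g s = of_nat s * (((t - 1) / 2) ^ (s - 1) * ((t + 1) / 2) ^ (N - s)) +
        of_nat (N - s) * (((t - 1) / 2) ^ s * ((t + 1) / 2) ^ (N - s - 1))" for s
  have T1: "\<sigma> ^ (N - 1) * (((t - 1) / 2) ^ (s - 1) * ((t + 1) / 2) ^ (N - s)) > 0"
    if "1 \<le> s" "s \<le> N" for s
  proof -
    have "N - 1 = (s - 1) + (N - s)" using that by simp
    then have "\<sigma> ^ (N - 1) * (((t - 1) / 2) ^ (s - 1) * ((t + 1) / 2) ^ (N - s)) = U ^ (s - 1) * V ^ (N - s)"
      unfolding u v using sign_pow[OF ss] by simp
    then show ?thesis using U0 V0 by simp
  qed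
  have T2: "\<sigma> ^ (N - 1) * (((t - 1) / 2) ^ s * ((t + 1) / 2) ^ (N - s - 1)) > 0"
    if "s < N" for s
  proof -
    have "N - 1 = s + (N - s - 1)" using that by simp
    then have "\<sigma> ^ (N - 1) * (((t - 1) / 2) ^ s * ((t + 1) / 2) ^ (N - s - 1)) = U ^ s * V ^ (N - s - 1)"
      unfolding u v using sign_pow[OF ss] by simp
    then show ?thesis using U0 V0 by simp
  qed
  have gnn: "\<sigma> ^ (N - 1) * g s \<ge> 0" if "s \<le> N" for s
  proof -
    have A: "of_nat s * (\<sigma> ^ (N - 1) * (((t - 1) / 2) ^ (s - 1) * ((t + 1) / 2) ^ (N - s))) \<ge> 0"
      using T1[of s] that by (cases "s = 0") (auto intro: less_imp_le)
    have B: "of_nat (N - s) * (\<sigma> ^ (N - 1) * (((t - 1) / 2) ^ s * ((t + 1) / 2) ^ (N - s - 1))) \<ge> 0"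
      using T2[of s] that by (cases "s = N") (auto intro: less_imp_le)
    show ?thesis using add_nonneg_nonneg[OF A B] by (simp add: g_def algebra_simps)
  qed
  have gpos: "\<sigma> ^ (N - 1) * g N > 0"
  proof -
    have "\<sigma> ^ (N - 1) * g N = of_nat N * (\<sigma> ^ (N - 1) * (((t - 1) / 2) ^ (N - 1) * ((t + 1) / 2) ^ (N - N)))"
      by (simp add: g_def)
    moreover have "\<sigma> ^ (N - 1) * (((t - 1) / 2) ^ (N - 1) * ((t + 1) / 2) ^ (N - N)) > 0"
      using T1[of N] N by simp
    moreover have "of_nat N > (0::real)" using N by simp
    ultimately show ?thesis by (metis mult_pos_pos)
  qed
  have "\<sigma> ^ (N - 1) * poly (pderiv (jacobi_poly a b N)) t = (\<Sum>s\<le>N. c s * (\<sigma> ^ (N - 1) * g s) / 2)"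
    unfolding jacobi_deriv c_def g_def by (simp add: sum_distrib_left mult_ac)
  also have "\<dots> > 0"
  proof (rule sum_pos2[of _ N])
    show "0 < c N * (\<sigma> ^ (N - 1) * g N) / 2"
      using gpos jacobi_coeff_pos[OF a b, of N N] by (simp add: c_def)
    show "\<And>s. s \<in> {..N} \<Longrightarrow> 0 \<le> c s * (\<sigma> ^ (N - 1) * g s) / 2"
    proof -
      fix s assume "s \<in> {..N}"
      then have "c s > 0" "\<sigma> ^ (N - 1) * g s \<ge> 0" using gnn jacobi_coeff_pos[OF a b] by (auto simp: c_def)
      then show "0 \<le> c s * (\<sigma> ^ (N - 1) * g s) / 2" by simp
    qed
  qed auto
  finally show ?thesis by auto
qed

lemma nodes_ends:
  fixes a b :: real
  assumes N: "N \<ge> 1" and a: "a > -1" and b: "b > -1"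
    and mono: "strict_mono_on {..N} x"
    and zeros: "x ` {..N} = {t. poly (jgl_poly a b N) t = 0}"
  shows "x 0 = -1" "x N = 1"
proof -
  have inside: "-1 \<le> t \<and> t \<le> 1" if "poly (jgl_poly a b N) t = 0" for t
  proof (rule ccontr)
    assume "\<not> (-1 \<le> t \<and> t \<le> 1)"
    then have t: "t > 1 \<or> t < -1" by auto
    have "poly [:1, 0, -1:] t \<noteq> 0"
    proof
      assume "poly [:1, 0, -1:] t = 0"
      then have "t * t = 1" by (simp add: algebra_simps)
      moreover have "(t - 1) * (t + 1) \<noteq> 0" using t by auto
      ultimately show False by (simp add: algebra_simps)
    qed
    moreover have "poly (pderiv (jacobi_poly a b N)) t \<noteq> 0"
      by (rule jacobi_deriv_nonzero[OF a b N t])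
    ultimately show False using that by (simp add: jgl_poly_def)
  qed
  have m1: "-1 \<in> x ` {..N}" unfolding zeros by (simp add: jgl_poly_def)
  have p1: "1 \<in> x ` {..N}" unfolding zeros by (simp add: jgl_poly_def)
  have rng: "-1 \<le> x i \<and> x i \<le> 1" if "i \<le> N" for i
    using inside that zeros by blast
  from m1 obtain i where i: "i \<le> N" "x i = -1" by auto
  show "x 0 = -1"
  proof (cases "i = 0")
    case False
    then have "x 0 < x i" using strict_mono_onD[OF mono, of 0 i] i by auto
    then show ?thesis using rng[of 0] i by simp
  qed (use i in simp)
  from p1 obtain j where j: "j \<le> N" "x j = 1" by auto
  show "x N = 1"
  proof (cases "j = N")
    case False
    then have "x j < x N" using strict_mono_onD[OF mono, of j N] j by auto
    then show ?thesis using rng[of N] j by simp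
  qed (use j in simp)
qed

lemma reidx: "(\<Sum>m=1..n. f m) = (\<Sum>m<n. f (Suc m) :: real)"
  by (induction n) (auto simp: sum.lessThan_Suc)

theorem theorem4p1:
  fixes N k :: nat and \<alpha> \<beta> \<mu> :: real
    and x :: "nat \<Rightarrow> real" and Q :: "nat \<Rightarrow> real poly"
  assumes N: "N \<ge> 2"
    and ab: "\<alpha> > -1" "\<beta> > -1"
    and nodes_mono: "strict_mono_on {..N} x"
    and nodes_zeros: "x ` {..N} = {t. poly (jgl_poly \<alpha> \<beta> N) t = 0}"
    and k: "k \<in> {1, 2}"
    and mu: "real k - 1 < \<mu>" "\<mu> < real k"
    and Q_deg: "\<forall>j\<in>{1..N+1-k}. degree (Q j) \<le> N"
    and Q1: "k = 1 \<longrightarrow> (\<forall>j\<in>{1..N}.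
              (\<forall>i\<in>{1..N}. caputo \<mu> (Q j) (x i) = (if i = j then 1 else 0))
              \<and> poly (Q j) (-1) = 0)"
    and Q2: "k = 2 \<longrightarrow> (\<forall>j\<in>{1..N-1}.
              (\<forall>i\<in>{1..N-1}. caputo \<mu> (Q j) (x i) = (if i = j then 1 else 0))
              \<and> poly (Q j) (-1) = 0 \<and> poly (Q j) 1 = 0)"
  shows "\<forall>l\<in>{1..N+1-k}. \<forall>j\<in>{1..N+1-k}.
           (\<Sum>m=1..N+1-k. poly (Q m) (x l) * caputo \<mu> (lagrange_basis x N j) (x m))
             = (if l = j then 1 else 0)
         \<and> (\<Sum>m=1..N+1-k. caputo \<mu> (lagrange_basis x N m) (x l) * poly (Q j) (x m))
             = (if l = j then 1 else 0)"
proof -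
  have inj: "inj_on x {..N}" using nodes_mono by (rule strict_mono_on_imp_inj_on)
  have x0: "x 0 = -1" and xN: "x N = 1"
    using nodes_ends[OF _ ab nodes_mono nodes_zeros] N by auto
  define n where "n = N + 1 - k"
  have k12: "k = 1 \<or> k = 2" using k by auto
  have nN: "n \<le> N" "1 \<le> n" using k12 N by (auto simp: n_def)
  have mu0: "\<mu> > 0" using mu k12 by auto
  have muZ: "\<mu> \<notin> \<int>"
  proof
    assume "\<mu> \<in> \<int>"
    then obtain z where z: "\<mu> = of_int z" by (auto elim: Ints_cases)
    then have "real k - 1 < of_int z" "of_int z < real k" using mu by auto
    then have "int k - 1 < z" "z < int k" by linarith+
    then show False by linarith
  qed
  have Qcap: "caputo \<mu> (Q j) (x i) = (if i = j then 1 else 0)" if "i \<in> {1..n}" "j \<in> {1..n}" for i j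
    using k12 Q1 Q2 that by (auto simp: n_def)
  have Qvan: "poly (Q j) (x m) = 0" if "j \<in> {1..n}" "m \<le> N" "m \<notin> {1..n}" for j m
  proof -
    have "m = 0 \<or> (k = 2 \<and> m = N)" using that k12 by (auto simp: n_def)
    then show ?thesis using k12 Q1 Q2 that x0 xN by (auto simp: n_def)
  qed
  have DQ: "(\<Sum>m=1..n. caputo \<mu> (lagrange_basis x N m) (x l) * poly (Q j) (x m))
             = (if l = j then 1 else 0)" if l: "l \<in> {1..n}" and j: "j \<in> {1..n}" for l j
  proof -
    have degQ: "degree (Q j) \<le> N" using Q_deg j by (auto simp: n_def)
    have "caputo \<mu> (Q j) (x l) = caputo \<mu> (\<Sum>m\<in>{..N}. Polynomial.smult (poly (Q j) (x m)) (lagrange_basis x N m)) (x l)"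
      using interp[OF inj degQ] by simp
    also have "\<dots> = (\<Sum>m\<in>{..N}. poly (Q j) (x m) * caputo \<mu> (lagrange_basis x N m) (x l))"
      by (rule caputo_sum[OF mu0 _ muZ]) simp
    also have "\<dots> = (\<Sum>m\<in>{1..n}. poly (Q j) (x m) * caputo \<mu> (lagrange_basis x N m) (x l))"
      by (rule sum.mono_neutral_right) (use nN Qvan j in auto)
    finally show ?thesis using Qcap[OF l j] by (simp add: mult.commute)
  qed
  define A where "A = Matrix.mat n n (\<lambda>(i, j). caputo \<mu> (lagrange_basis x N (Suc j)) (x (Suc i)))"
  define B where "B = Matrix.mat n n (\<lambda>(i, j). poly (Q (Suc j)) (x (Suc i)))"
  have Ac: "A \<in> carrier_mat n n" and Bc: "B \<in> carrier_mat n n" by (auto simp: A_def B_def)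
  have AB: "A * B = 1\<^sub>m n"
  proof (rule eq_matI)
    fix i j assume i: "i < dim_row (1\<^sub>m n)" and j: "j < dim_col (1\<^sub>m n)"
    have "(A * B) $$ (i, j) = (\<Sum>m<n. caputo \<mu> (lagrange_basis x N (Suc m)) (x (Suc i)) * poly (Q (Suc j)) (x (Suc m)))"
      using i j by (simp add: A_def B_def scalar_prod_def atLeast0LessThan)
    also have "\<dots> = (\<Sum>m=1..n. caputo \<mu> (lagrange_basis x N m) (x (Suc i)) * poly (Q (Suc j)) (x m))"
      by (rule reidx[symmetric])
    also have "\<dots> = (if Suc i = Suc j then 1 else 0)"
      by (rule DQ) (use i j in auto)
    finally show "(A * B) $$ (i, j) = 1\<^sub>m n $$ (i, j)" using i j by simp
  qed (auto simp: A_def B_def)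
  have BA: "B * A = 1\<^sub>m n" by (rule mat_mult_left_right_inverse[OF Ac Bc AB])
  have QD: "(\<Sum>m=1..n. poly (Q m) (x l) * caputo \<mu> (lagrange_basis x N j) (x m))
             = (if l = j then 1 else 0)" if l: "l \<in> {1..n}" and j: "j \<in> {1..n}" for l j
  proof -
    have i: "l - 1 < n" and jj: "j - 1 < n" using l j by auto
    have "(\<Sum>m=1..n. poly (Q m) (x l) * caputo \<mu> (lagrange_basis x N j) (x m))
       = (\<Sum>m<n. poly (Q (Suc m)) (x (Suc (l - 1))) * caputo \<mu> (lagrange_basis x N (Suc (j - 1))) (x (Suc m)))"
      using l j reidx[of "\<lambda>m. poly (Q m) (x l) * caputo \<mu> (lagrange_basis x N j) (x m)" n] by simp
    also have "\<dots> = (B * A) $$ (l - 1, j - 1)"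
      using i jj by (simp add: A_def B_def scalar_prod_def atLeast0LessThan)
    also have "\<dots> = (if l = j then 1 else 0)"
      using BA i jj l j by auto
    finally show ?thesis .
  qed
  show ?thesis using QD DQ by (simp add: n_def)
qed

end
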